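(* The function $\mathcal{I}\colon[0,1]\cap\mathbb{Q}\to\mathbb{R}$ extends uniquely to a continuous, strictly increasing function $\mathcal{I}\colon[0,1]\to\mathbb{R}$. Moreover, for all real $x\in[0,1]$ the extension satisfies $\mathcal{I}(0)=0$, $\mathcal{I}(x)=4^{-\lfloor1/x\rfloor}\big(1-2\,\mathcal{I}(\{1/x\})\big)$ if $0<x\le\tfrac12$, and $\mathcal{I}(x)=\tfrac38-\tfrac34\,\mathcal{I}(1/x-1)-\tfrac12\,\mathcal{I}(1-x)$ if $\tfrac12<x\le1$.
   Context: For $x\in\mathbb{R}$ let $\{x\}=x-\lfloor x\rfloor$. The interrobang function $\mathcal{I}\colon[0,1]\cap\mathbb{Q}\to\mathbb{R}$ is defined recursively by $\mathcal{I}(0)=0$; $\mathcal{I}(x)=4^{-\lfloor1/x\rfloor}\big(1-2\,\mathcal{I}(\{1/x\})\big)$ if $0<x\le\tfrac12$; and $\mathcal{I}(x)=\tfrac38-\tfrac34\,\mathcal{I}(1/x-1)-\tfrac12\,\mathcal{I}(1-x)$ if $\tfrac12<x\le1$. The recursion is well founded: with the height $a/b\mapsto|a|+|b|$ ($\gcd(a,b)=1$), every argument on the right-hand side has strictly smaller height than $x$, so $\mathcal{I}$ is uniquely defined. *)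

theory Defs
  imports "HOL-Analysis.Analysis"
begin

definition rat_height :: "rat \<Rightarrow> nat" where
  "rat_height r = (case quotient_of r of (a, b) \<Rightarrow> nat \<bar>a\<bar> + nat \<bar>b\<bar>)"

lemma rat_height_Fract_le:
  assumes "b > 0"
  shows "rat_height (Fract a b) \<le> nat \<bar>a\<bar> + nat b"
proof -
  define c where "c = gcd a b"
  have c: "c \<ge> 1" using assms c_def by (simp add: int_one_le_iff_zero_less)
  have q: "quotient_of (Fract a b) = (a div c, b div c)"
    using assms by (simp add: quotient_of_Fract normalize_def c_def Let_def)
  have "\<bar>a div c\<bar> \<le> \<bar>a\<bar>"
  proof (cases "a \<ge> 0")
    case True
    have "a div c \<le> a" using True by (cases "a = 0") (auto intro: int_div_le_self)
    moreover have "a div c \<ge> 0" using True c by (simp add: pos_imp_zdiv_nonneg_iff)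
    ultimately show ?thesis using True by simp
  next
    case False
    have "a div c \<ge> a" using c False by (smt (verit) div_by_1 zdiv_mono2_neg)
    moreover have "a div c \<le> 0" using c False by (simp add: div_nonpos_pos_le0)
    ultimately show ?thesis using False by simp
  qed
  moreover have "\<bar>b div c\<bar> \<le> b" using c assms
    by (simp add: int_div_le_self pos_imp_zdiv_nonneg_iff)
  ultimately have "nat \<bar>a div c\<bar> + nat \<bar>b div c\<bar> \<le> nat \<bar>a\<bar> + nat b"
    by linarith
  then show ?thesis by (simp add: rat_height_def q)
qed

lemma rat_height_aux_a: "(q::int) > 0 \<Longrightarrow> of_int p / of_int q \<le> (1/2::rat) \<Longrightarrow> 2*p \<le> q"
proof -
  assume "q>0" "of_int p / of_int q \<le> (1/2::rat)"
  then have "rat_of_int (2*p) \<le> rat_of_int q" by (simp add: field_simps)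
  then show ?thesis by linarith
qed
lemma rat_height_aux_b: "(q::int) > 0 \<Longrightarrow> of_int p / of_int q \<le> (1::rat) \<Longrightarrow> p \<le> q"
proof -
  assume "q>0" "of_int p / of_int q \<le> (1::rat)"
  then have "rat_of_int p \<le> rat_of_int q" by (simp add: field_simps)
  then show ?thesis by linarith
qed
lemma rat_height_aux_c: "(q::int) > 0 \<Longrightarrow> (1/2::rat) < of_int p / of_int q \<Longrightarrow> q < 2*p"
proof -
  assume "q>0" "(1/2::rat) < of_int p / of_int q"
  then have "rat_of_int q < rat_of_int (2*p)" by (simp add: field_simps)
  then show ?thesis by linarith
qed
lemma rat_height_aux_d: "(q::int) > 0 \<Longrightarrow> (0::rat) < of_int p / of_int q \<Longrightarrow> 0 < p"
  by (simp add: zero_less_divide_iff)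

text \<open>The interrobang function on rationals. Outside [0,1] it is set to 0
  (junk value, irrelevant to the statement).\<close>
function interrobang_rat :: "rat \<Rightarrow> real" where
  "interrobang_rat x =
     (if x \<le> 0 \<or> x > 1 then 0
      else if x \<le> 1/2 then
        4 powr (- real_of_int \<lfloor>1 / x\<rfloor>) * (1 - 2 * interrobang_rat (frac (1 / x)))
      else 3/8 - 3/4 * interrobang_rat (1 / x - 1) - 1/2 * interrobang_rat (1 - x))"
  by auto
termination
proof (relation "Wellfounded.measure rat_height", goal_cases)
  case 1 then show ?case by simp
next
  case (2 x)
  obtain p q where qo: "quotient_of x = (p, q)" by (cases "quotient_of x") auto
  have q0: "q > 0" using qo by (rule quotient_of_denom_pos)
  have xq: "x = of_int p / of_int q" using qo by (rule quotient_of_div)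
  have x: "x = Fract p q" using xq by (simp add: Fract_of_int_quotient)
  have xr: "0 < x" "x \<le> 1" using 2 by (auto simp: not_le)
  have pp: "p > 0" using rat_height_aux_d[OF q0 xr(1)[unfolded xq]] .
  have pq: "p \<le> q" using rat_height_aux_b[OF q0 xr(2)[unfolded xq]] .
  have hx: "rat_height x = nat p + nat q" using qo pp q0 by (simp add: rat_height_def)
  have "frac (1 / x) = Fract q p - of_int (q div p)"
    using x by (simp add: frac_def divide_inverse)
  also have "\<dots> = Fract (q mod p) p"
  proof -
    have e: "q - q div p * p = q mod p" by (rule minus_div_mult_eq_mod)
    show ?thesis using pp by (simp add: of_int_rat diff_rat e)
  qed
  finally have f: "frac (1 / x) = Fract (q mod p) p" .
  have "rat_height (frac (1/x)) \<le> nat \<bar>q mod p\<bar> + nat p"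
    unfolding f using pp by (rule rat_height_Fract_le)
  moreover have "q mod p < p" using pp by simp
  moreover have "q mod p \<ge> 0" using pp by simp
  ultimately have "nat \<bar>q mod p\<bar> < nat q" using pq by simp
  with \<open>rat_height (frac (1/x)) \<le> nat \<bar>q mod p\<bar> + nat p\<close>
  have "rat_height (frac (1/x)) < nat p + nat q" by linarith
  then show ?case using hx by simp
next
  case (3 x)
  obtain p q where qo: "quotient_of x = (p, q)" by (cases "quotient_of x") auto
  have q0: "q > 0" using qo by (rule quotient_of_denom_pos)
  have xq: "x = of_int p / of_int q" using qo by (rule quotient_of_div)
  have x: "x = Fract p q" using xq by (simp add: Fract_of_int_quotient)
  have xr: "0 < x" "x \<le> 1" using 3 by (auto simp: not_le)
  have pp: "p > 0" using rat_height_aux_d[OF q0 xr(1)[unfolded xq]] .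
  have pq: "p \<le> q" using rat_height_aux_b[OF q0 xr(2)[unfolded xq]] .
  have hx: "rat_height x = nat p + nat q" using qo pp q0 by (simp add: rat_height_def)
  have f: "1 / x - 1 = Fract (q - p) p"
    using x pp by (simp add: divide_inverse One_rat_def)
  have "rat_height (1 / x - 1) \<le> nat \<bar>q - p\<bar> + nat p"
    unfolding f using pp by (rule rat_height_Fract_le)
  then show ?case using hx pp q0 pq by simp
next
  case (4 x)
  obtain p q where qo: "quotient_of x = (p, q)" by (cases "quotient_of x") auto
  have q0: "q > 0" using qo by (rule quotient_of_denom_pos)
  have xq: "x = of_int p / of_int q" using qo by (rule quotient_of_div)
  have x: "x = Fract p q" using xq by (simp add: Fract_of_int_quotient)
  have xr: "0 < x" "x \<le> 1" using 4 by (auto simp: not_le)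
  have pp: "p > 0" using rat_height_aux_d[OF q0 xr(1)[unfolded xq]] .
  have pq: "p \<le> q" using rat_height_aux_b[OF q0 xr(2)[unfolded xq]] .
  have hx: "rat_height x = nat p + nat q" using qo pp q0 by (simp add: rat_height_def)
  have xh: "1/2 < x" using 4 by (auto simp: not_le)
  have half: "q < 2 * p" using rat_height_aux_c[OF q0 xh[unfolded xq]] .
  have f: "1 - x = Fract (q - p) q"
    using x q0 by (simp add: One_rat_def)
  have "rat_height (1 - x) \<le> nat \<bar>q - p\<bar> + nat q"
    unfolding f using q0 by (rule rat_height_Fract_le)
  then show ?case using hx pp q0 pq half by simp
qed

end

theory Submission
  imports Defs
begin

definition Top :: "(real \<Rightarrow> real) \<Rightarrow> real \<Rightarrow> real" where
  "Top g x = (if x \<le> 0 \<or> x > 1 then 0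
      else if x \<le> 1/2 then 4 powr (- real_of_int \<lfloor>1 / x\<rfloor>) * (1 - 2 * g (frac (1 / x)))
      else 3/8 - 3/4 * g (1 / x - 1) - 1/2 * g (1 - x))"

lemma pw_pos: "(0::real) < 4 powr (- real_of_int n)" by simp

lemma pw_succ: "(4::real) powr (- real_of_int (n+1)) = 4 powr (- real_of_int n) / 4"
proof -
  have "- real_of_int (n+1) = - real_of_int n - 1" by simp
  then show ?thesis by (simp only: powr_diff) simp
qed

lemma pw_mono: "m \<le> n \<Longrightarrow> (4::real) powr (- real_of_int n) \<le> 4 powr (- real_of_int m)"
  by (intro powr_mono) auto

lemma pw_2: "(4::real) powr (- real_of_int 2) = 1/16"
  by (simp add: powr_minus powr_numeral)

lemma pw_le16: "2 \<le> n \<Longrightarrow> (4::real) powr (- real_of_int n) \<le> 1/16"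
proof -
  assume "2 \<le> n"
  then have "(4::real) powr (- real_of_int n) \<le> 4 powr (- real_of_int (2::int))" by (rule pw_mono)
  also have "\<dots> = 1/16" by (rule pw_2)
  finally show ?thesis .
qed

lemma four_pow_ge: "real m + 1 \<le> (4::real) ^ m"
  by (induction m) auto

lemma pw_lt: assumes "0 < x" shows "(4::real) powr (- real_of_int \<lfloor>1/x\<rfloor>) < x"
proof -
  have f0: "\<lfloor>1/x\<rfloor> \<ge> 0" using assms by simp
  define m where "m = nat \<lfloor>1/x\<rfloor>"
  have "real_of_int \<lfloor>1/x\<rfloor> = real m" using f0 m_def by simp
  then have e: "(4::real) powr (- real_of_int \<lfloor>1/x\<rfloor>) = 1 / 4 ^ m"
    by (simp add: powr_minus powr_realpow divide_inverse)
  have "1/x < real m + 1" using f0 m_def by linarith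
  also have "\<dots> \<le> 4 ^ m" by (rule four_pow_ge)
  finally have "1/x < 4^m" .
  then have "1 / 4^m < x" using assms by (simp add: divide_less_eq mult.commute)
  then show ?thesis using e by simp
qed

lemma floor_piece:
  fixes n :: nat assumes "n \<ge> 1" "1/(real n+1) < x" "x \<le> 1/real n"
  shows "\<lfloor>1/x\<rfloor> = int n"
proof -
  have x0: "x > 0" using assms(2) by (smt (verit) divide_pos_pos of_nat_0_le_iff)
  have "real n \<le> 1/x" using assms x0 by (simp add: field_simps)
  moreover have "1/x < real n + 1" using assms x0 by (simp add: field_simps)
  ultimately show ?thesis by (intro floor_unique) auto
qed

definition Bd :: "(real \<Rightarrow> real) \<Rightarrow> bool" where
  "Bd g \<longleftrightarrow> g 0 = 0 \<and> g (1/2) = 1/16 \<and> g 1 = 3/8"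

definition Mn :: "(real \<Rightarrow> real) \<Rightarrow> bool" where
  "Mn g \<longleftrightarrow> (\<forall>x y. 0 \<le> x \<longrightarrow> x \<le> y \<longrightarrow> y \<le> 1 \<longrightarrow> g x \<le> g y)"

lemma Mn_range: "Mn g \<Longrightarrow> Bd g \<Longrightarrow> 0 \<le> x \<Longrightarrow> x \<le> 1 \<Longrightarrow> 0 \<le> g x \<and> g x \<le> 3/8"
  unfolding Mn_def Bd_def by (metis order_refl zero_le_one)

lemma Top_zero: "Top g 0 = 0" by (simp add: Top_def)

lemma pw_m2: "(4::real) powr (-2) = 1/16" using pw_2 by simp

lemma Top_half: "g 0 = 0 \<Longrightarrow> Top g (1/2) = 1/16"
proof -
  assume "g 0 = 0"
  then show ?thesis by (simp add: Top_def pw_m2 frac_def)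
qed

lemma Top_one: "g 0 = 0 \<Longrightarrow> Top g 1 = 3/8"
  by (simp add: Top_def)

lemma Top_Bd: "g 0 = 0 \<Longrightarrow> Bd (Top g)"
  using Top_zero Top_half Top_one unfolding Bd_def by blast

lemma Top_piece:
  fixes n :: nat
  assumes g: "g 0 = 0" "g 1 = 3/8" and n: "n \<ge> 2" and x: "1/(real n+1) \<le> x" "x \<le> 1/real n"
  shows "Top g x = 4 powr (- real n) * (1 - 2 * g (1/x - real n))"
proof (cases "x = 1/(real n+1)")
  case True
  have fl: "\<lfloor>1/x\<rfloor> = int n + 1" using True by simp
  have fr0: "frac (1/x) = 0" using True by (simp add: frac_def)
  have fr: "g (frac (1/x)) = 0" unfolding fr0 using g by simp
  have x2: "x \<le> 1/2" unfolding True by (intro divide_left_mono) (use n in auto)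
  have "Top g x = 4 powr (- real_of_int (int n + 1))"
    using True x2 fl fr g by (simp add: Top_def)
  also have "\<dots> = 4 powr (- real n) / 4" using pw_succ[of "int n"] by simp
  finally have A: "Top g x = 4 powr (- real n) / 4" .
  have B: "1/x - real n = 1" using True by simp
  show ?thesis unfolding A B g(2) by simp
next
  case False
  then have x1: "1/(real n+1) < x" using x by simp
  have fl: "\<lfloor>1/x\<rfloor> = int n" using floor_piece[OF _ x1 x(2)] n by simp
  have x0: "0 < x" using x1 by (smt (verit) divide_pos_pos of_nat_0_le_iff)
  have "1/real n \<le> 1/2" by (intro divide_left_mono) (use n in auto)
  then have x2: "x \<le> 1/2" using x(2) by linarith
  have fr: "frac (1/x) = 1/x - real n" using fl by (simp add: frac_def)
  show ?thesis using x0 x2 fl fr by (simp add: Top_def)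
qed

lemma Top_right:
  assumes g: "Bd g" and x: "1/2 \<le> x" "x \<le> 1"
  shows "Top g x = 3/8 - 3/4 * g (1/x - 1) - 1/2 * g (1 - x)"
proof (cases "x = 1/2")
  case True
  have "Top g (1/2) = 1/16" using g Top_half[of g] by (simp add: Bd_def)
  then show ?thesis unfolding True using g by (simp add: Bd_def)
next
  case False
  then show ?thesis using x by (simp add: Top_def)
qed

lemma floor_ge2: fixes x :: real assumes "0 < x" "x \<le> 1/2" shows "\<lfloor>1/x\<rfloor> \<ge> 2"
proof -
  have "(2::real) \<le> 1/x" using assms by (simp add: field_simps)
  then show ?thesis by (simp add: le_floor_iff)
qed

lemma frac_in: "0 \<le> frac (y::real) \<and> frac y \<le> 1"
  using frac_lt_1[of y] by (simp add: frac_ge_0 less_imp_le)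

lemma Top_lo_hi:
  assumes g: "Bd g" "Mn g" and x: "0 < x" "x \<le> 1/2"
  shows "4 powr (- real_of_int (\<lfloor>1/x\<rfloor> + 1)) \<le> Top g x \<and> Top g x \<le> 4 powr (- real_of_int \<lfloor>1/x\<rfloor>)"
proof -
  define p where "p = (4::real) powr (- real_of_int \<lfloor>1/x\<rfloor>)"
  have p0: "p > 0" unfolding p_def by simp
  have gr: "0 \<le> g (frac (1/x)) \<and> g (frac (1/x)) \<le> 3/8" using Mn_range[OF g(2) g(1)] frac_in by blast
  have T: "Top g x = p * (1 - 2 * g (frac (1/x)))" using x by (simp add: Top_def p_def)
  have "p / 4 \<le> p * (1 - 2 * g (frac (1/x)))" using p0 gr by (simp add: mult_left_mono)
  moreover have "p * (1 - 2 * g (frac (1/x))) \<le> p" using p0 gr by (simp add: mult_left_le)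
  moreover have "4 powr (- real_of_int (\<lfloor>1/x\<rfloor> + 1)) = p / 4" unfolding p_def by (rule pw_succ)
  ultimately show ?thesis using T unfolding p_def[symmetric] by linarith
qed

lemma Top_small:
  assumes g: "Bd g" "Mn g" and x: "0 \<le> x" "x \<le> 1/2"
  shows "0 \<le> Top g x \<and> Top g x \<le> 1/16"
proof (cases "x = 0")
  case True then show ?thesis by (simp add: Top_zero)
next
  case False
  then have x0: "0 < x" using x by simp
  have "(4::real) powr (- real_of_int \<lfloor>1/x\<rfloor>) \<le> 1/16" using pw_le16 floor_ge2[OF x0 x(2)] by blast
  moreover have "(0::real) \<le> 4 powr (- real_of_int (\<lfloor>1/x\<rfloor> + 1))" by simp
  ultimately show ?thesis using Top_lo_hi[OF g x0 x(2)] by linarith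
qed

lemma Top_big:
  assumes g: "Bd g" "Mn g" and x: "1/2 < x" "x \<le> 1"
  shows "1/16 \<le> Top g x \<and> Top g x \<le> 3/8"
proof -
  have x0: "0 < x" using x by simp
  have a: "0 \<le> 1/x - 1" "1/x - 1 \<le> 1" using x x0 by (auto simp: field_simps)
  have "0 \<le> g (1/x - 1) \<and> g (1/x - 1) \<le> 3/8" using Mn_range[OF g(2) g(1)] a by blast
  moreover have "0 \<le> g (1 - x)" using Mn_range[OF g(2) g(1)] x by simp
  moreover have "g (1 - x) \<le> g (1/2)" using g(2) x unfolding Mn_def by simp
  moreover have T: "Top g x = 3/8 - 3/4 * g (1/x - 1) - 1/2 * g (1 - x)"
    using x by (simp add: Top_def)
  ultimately show ?thesis using g(1) unfolding Bd_def by simp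
qed

lemma Top_Mn:
  assumes g: "Bd g" "Mn g"
  shows "Mn (Top g)"
  unfolding Mn_def
proof (intro allI impI)
  fix x y :: real
  assume xy: "0 \<le> x" "x \<le> y" "y \<le> 1"
  show "Top g x \<le> Top g y"
  proof (cases "y \<le> 1/2")
    case yh: True
    show ?thesis
    proof (cases "x = 0")
      case True then show ?thesis using Top_small[OF g _ yh] xy by (simp add: Top_zero)
    next
      case False
      then have x0: "0 < x" using xy by simp
      have y0: "0 < y" using x0 xy by simp
      have xh: "x \<le> 1/2" using xy yh by simp
      have fm: "\<lfloor>1/y\<rfloor> \<le> \<lfloor>1/x\<rfloor>" using x0 xy by (intro floor_mono) (simp add: frac_le)
      show ?thesis
      proof (cases "\<lfloor>1/y\<rfloor> = \<lfloor>1/x\<rfloor>")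
        case True
        define p where "p = (4::real) powr (- real_of_int \<lfloor>1/x\<rfloor>)"
        have p0: "p > 0" unfolding p_def by simp
        have "frac (1/y) \<le> frac (1/x)" using True x0 xy by (simp add: frac_def frac_le)
        then have "g (frac (1/y)) \<le> g (frac (1/x))" using g(2) frac_in unfolding Mn_def by blast
        then have "p * (1 - 2 * g (frac (1/x))) \<le> p * (1 - 2 * g (frac (1/y)))"
          using p0 by (intro mult_left_mono) auto
        then show ?thesis using x0 y0 xh yh True by (simp add: Top_def p_def)
      next
        case False
        then have "\<lfloor>1/y\<rfloor> + 1 \<le> \<lfloor>1/x\<rfloor>" using fm by simp
        then have "(4::real) powr (- real_of_int \<lfloor>1/x\<rfloor>) \<le> 4 powr (- real_of_int (\<lfloor>1/y\<rfloor> + 1))"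
          by (rule pw_mono)
        then show ?thesis using Top_lo_hi[OF g x0 xh] Top_lo_hi[OF g y0 yh] by linarith
      qed
    qed
  next
    case yh: False
    show ?thesis
    proof (cases "x \<le> 1/2")
      case True
      then show ?thesis using Top_small[OF g xy(1) True] Top_big[OF g _ xy(3)] yh by simp
    next
      case False
      have x0: "0 < x" using False by simp
      have a: "0 \<le> 1/y - 1" "1/y - 1 \<le> 1/x - 1" "1/x - 1 \<le> 1"
        using xy x0 False by (auto simp: field_simps)
      have "g (1/y - 1) \<le> g (1/x - 1)" using g(2) a unfolding Mn_def by blast
      moreover have "g (1 - y) \<le> g (1 - x)" using g(2) xy unfolding Mn_def by simp
      ultimately show ?thesis using False yh xy by (simp add: Top_def)
    qed
  qed
qed

lemma cont_local:
  fixes f :: "real \<Rightarrow> real"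
  assumes "x \<in> U" "open U" "U \<inter> S \<subseteq> T" "continuous_on T f" "x \<in> T"
  shows "continuous (at x within S) f"
proof -
  have e: "at x within S = at x within (U \<inter> S)"
    by (rule at_within_nhd[OF assms(1,2)]) blast
  have "continuous (at x within T) f" using assms(4,5) continuous_on_eq_continuous_within by blast
  then have "continuous (at x within (U \<inter> S)) f" using assms(3) by (rule continuous_within_subset)
  then show ?thesis unfolding continuous_within e .
qed

definition H :: "(real \<Rightarrow> real) \<Rightarrow> nat \<Rightarrow> real \<Rightarrow> real" where
  "H g n x = (if n = 1 then 3/8 - 3/4 * g (1/x - 1) - 1/2 * g (1 - x)
     else 4 powr (- real n) * (1 - 2 * g (1/x - real n)))"

lemma Top_H:
  fixes n :: nat
  assumes g: "Bd g" and n: "n \<ge> 1" and x: "1/(real n+1) \<le> x" "x \<le> 1/real n"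
  shows "Top g x = H g n x"
proof (cases "n = 1")
  case True
  then show ?thesis using Top_right[OF g] x by (simp add: H_def)
next
  case False
  then have "n \<ge> 2" using n by simp
  then show ?thesis using Top_piece[of g n x] g x False unfolding Bd_def H_def by simp
qed

lemma inv_piece_range:
  fixes n :: nat
  assumes n: "n \<ge> 1" and x: "1/(real n+1) \<le> x" "x \<le> 1/real n"
  shows "0 \<le> 1/x - real n \<and> 1/x - real n \<le> 1 \<and> x > 0"
proof -
  have x0: "x > 0" using x(1) by (smt (verit) divide_pos_pos of_nat_0_le_iff)
  have "real n \<le> 1/x" using x(2) x0 n by (simp add: field_simps)
  moreover have "1/x \<le> real n + 1" using x(1) x0 by (simp add: field_simps)
  ultimately show ?thesis using x0 by simp
qed

lemma H_cont:
  fixes n :: nat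
  assumes g: "continuous_on {0..1} g" and n: "n \<ge> 1"
  shows "continuous_on {1/(real n+1)..1/real n} (H g n)"
proof -
  let ?I = "{1/(real n+1)..1/real n}"
  have pos: "\<And>x. x \<in> ?I \<Longrightarrow> x > 0" using inv_piece_range[OF n] by auto
  have c1: "continuous_on ?I (\<lambda>x. 1/x - real n)"
    using pos by (intro continuous_intros) auto
  have c1': "continuous_on ?I (\<lambda>x. g (1/x - real n))"
    by (rule continuous_on_compose2[OF g c1]) (use inv_piece_range[OF n] in auto)
  show ?thesis
  proof (cases "n = 1")
    case True
    have c2: "continuous_on ?I (\<lambda>x. g (1/x - 1))" using c1' True by simp
    have c3: "continuous_on ?I (\<lambda>x. g (1 - x))"
      by (rule continuous_on_compose2[OF g]) (use True in \<open>auto intro!: continuous_intros\<close>)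
    have "continuous_on ?I (\<lambda>x. 3/8 - 3/4 * g (1/x - 1) - 1/2 * g (1 - x))"
      using c2 c3 by (intro continuous_intros)
    then show ?thesis using True by (simp add: H_def)
  next
    case False
    have "continuous_on ?I (\<lambda>x. 4 powr (- real n) * (1 - 2 * g (1/x - real n)))"
      using c1' by (intro continuous_intros)
    then show ?thesis using False by (simp add: H_def)
  qed
qed

lemma Top_cont_piece:
  fixes n :: nat
  assumes g: "Bd g" "continuous_on {0..1} g" and n: "n \<ge> 1"
  shows "continuous_on {1/(real n+1)..1/real n} (Top g)"
  using H_cont[OF g(2) n] by (rule continuous_on_eq) (use Top_H[OF g(1) n] in auto)

lemma Top_cont_pos:
  assumes g: "Bd g" "continuous_on {0..1} g" and x: "0 < x" "x \<le> 1"
  shows "continuous (at x within {0..1}) (Top g)"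
proof -
  define n where "n = nat \<lfloor>1/x\<rfloor>"
  have f1: "\<lfloor>1/x\<rfloor> \<ge> 1" using x by (simp add: le_floor_iff)
  have n1: "n \<ge> 1" using f1 n_def by linarith
  have nr: "real n = real_of_int \<lfloor>1/x\<rfloor>" unfolding n_def by (rule of_nat_nat) (use f1 in linarith)
  have "real n \<le> 1/x" using nr by linarith
  then have xu: "x \<le> 1/real n" using x n1 by (simp add: field_simps)
  have "1/x < real n + 1" using nr by linarith
  then have xl: "1/(real n+1) < x" using x by (simp add: field_simps)
  show ?thesis
  proof (cases "n = 1")
    case True
    have xl2: "1/2 < x" using xl True by simp
    show ?thesis
    proof (rule cont_local[of x "{1/2<..}" _ "{1/(real 1+1)..1/real 1}"])
      show "continuous_on {1/(real 1+1)..1/real 1} (Top g)" by (rule Top_cont_piece[OF g]) simp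
    qed (use xl2 x in auto)
  next
    case False
    then obtain m where m: "n = Suc m" "m \<ge> 1" using n1 by (cases n) auto
    have c1: "continuous_on {1/(real n+1)..1/real n} (Top g)" by (rule Top_cont_piece[OF g n1])
    have c2: "continuous_on {1/(real m+1)..1/real m} (Top g)" by (rule Top_cont_piece[OF g m(2)])
    have rm: "real m + 1 = real n" using m by simp
    have sub: "1/real n \<le> 1/real m" using m by (intro divide_left_mono) auto
    have sub2: "1/(real n+1) \<le> 1/real n" by (intro divide_left_mono) (use n1 in auto)
    have un: "{1/(real n+1)..1/real n} \<union> {1/(real m+1)..1/real m} = {1/(real n+1)..1/real m}"
      using sub sub2 unfolding rm by auto
    have c: "continuous_on {1/(real n+1)..1/real m} (Top g)"
      using continuous_on_closed_Un[OF _ _ c1 c2] un by simp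
    have "1/real n < 1/real m" using m by (intro divide_strict_left_mono) auto
    then have xm: "x < 1/real m" using xu by linarith
    show ?thesis
      by (rule cont_local[of x "{1/(real n+1)<..<1/real m}" _ _ _, OF _ _ _ c]) (use xl xm xu in auto)
  qed
qed

lemma Top_cont0:
  assumes g: "Bd g" "Mn g"
  shows "continuous (at 0 within {0..1}) (Top g)"
proof -
  have b: "\<bar>Top g y\<bar> \<le> y" if y: "0 \<le> y" "y \<le> 1" for y
  proof (cases "y \<le> 1/2")
    case True
    show ?thesis
    proof (cases "y = 0")
      case True then show ?thesis by (simp add: Top_zero)
    next
      case False
      then have y0: "0 < y" using y by simp
      have "0 \<le> Top g y" using Top_small[OF g y(1) True] by simp
      then show ?thesis using Top_lo_hi[OF g y0 True] pw_lt[OF y0] by linarith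
    qed
  next
    case False
    then show ?thesis using Top_big[OF g _ y(2)] by simp
  qed
  show ?thesis unfolding continuous_within_eps_delta
  proof (intro allI impI)
    fix e :: real assume e: "e > 0"
    show "\<exists>d>0. \<forall>x'\<in>{0..1}. dist x' 0 < d \<longrightarrow> dist (Top g x') (Top g 0) < e"
    proof (intro exI[of _ e] conjI ballI impI)
      fix x' :: real assume "x' \<in> {0..1}" "dist x' 0 < e"
      then show "dist (Top g x') (Top g 0) < e" using b[of x'] by (auto simp: Top_zero dist_real_def)
    qed (rule e)
  qed
qed

lemma Top_cont:
  assumes g: "Bd g" "Mn g" "continuous_on {0..1} g"
  shows "continuous_on {0..1} (Top g)"
  unfolding continuous_on_eq_continuous_within
proof
  fix x :: real assume "x \<in> {0..1}"
  then show "continuous (at x within {0..1}) (Top g)"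
    using Top_cont0[OF g(1,2)] Top_cont_pos[OF g(1,3)] by (cases "x = 0") auto
qed

definition Good :: "(real \<Rightarrow> real) \<Rightarrow> bool" where
  "Good g \<longleftrightarrow> Bd g \<and> Mn g \<and> continuous_on {0..1} g"

lemma Good_Top: "Good g \<Longrightarrow> Good (Top g)"
  unfolding Good_def using Top_Bd Top_Mn Top_cont by (simp add: Bd_def)

definition g0 :: "real \<Rightarrow> real" where "g0 x = x^2/8 + x^3/4"

lemma Good_g0: "Good g0"
proof -
  have "Bd g0" by (simp add: Bd_def g0_def power2_eq_square power3_eq_cube)
  moreover have "Mn g0" unfolding Mn_def g0_def
  proof (intro allI impI)
    fix x y :: real assume "0 \<le> x" "x \<le> y" "y \<le> 1"
    then have "x^2 \<le> y^2" "x^3 \<le> y^3" by (auto intro: power_mono)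
    then show "x^2/8 + x^3/4 \<le> y^2/8 + y^3/4" by simp
  qed
  moreover have "continuous_on {0..1} g0" unfolding g0_def by (intro continuous_intros) auto
  ultimately show ?thesis by (simp add: Good_def)
qed

definition it :: "nat \<Rightarrow> real \<Rightarrow> real" where "it k = (Top ^^ k) g0"

lemma it_Suc: "it (Suc k) = Top (it k)" by (simp add: it_def)

lemma it_Good: "Good (it k)"
  by (induction k) (auto simp: it_def Good_g0 Good_Top)

lemma Top_diff_small:
  assumes x: "0 < x" "x \<le> 1/2"
  shows "\<bar>Top g x - Top h x\<bar> \<le> 1/8 * \<bar>g (frac (1/x)) - h (frac (1/x))\<bar>"
proof -
  define p where "p = (4::real) powr (- real_of_int \<lfloor>1/x\<rfloor>)"
  have p: "0 < p" "p \<le> 1/16" unfolding p_def using pw_le16 floor_ge2[OF x] by auto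
  have "Top g x - Top h x = - 2 * p * (g (frac (1/x)) - h (frac (1/x)))"
    using x by (simp add: Top_def p_def algebra_simps)
  then have "\<bar>Top g x - Top h x\<bar> = 2 * p * \<bar>g (frac (1/x)) - h (frac (1/x))\<bar>"
    using p by (simp add: abs_mult)
  also have "\<dots> \<le> 2 * (1/16) * \<bar>g (frac (1/x)) - h (frac (1/x))\<bar>"
    using p by (intro mult_right_mono) auto
  finally show ?thesis by simp
qed

lemma Top_diff_big:
  assumes x: "1/2 < x" "x \<le> 1"
  shows "\<bar>Top g x - Top h x\<bar> \<le> 3/4 * \<bar>g (1/x - 1) - h (1/x - 1)\<bar> + 1/2 * \<bar>g (1 - x) - h (1 - x)\<bar>"
proof -
  have E: "Top g x - Top h x = - 3/4 * (g (1/x - 1) - h (1/x - 1)) - 1/2 * (g (1 - x) - h (1 - x))"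
    using x by (simp add: Top_def algebra_simps)
  have I: "\<bar>- 3/4 * a - 1/2 * b\<bar> \<le> 3/4 * \<bar>a\<bar> + 1/2 * \<bar>b\<bar>" for a b :: real
    by (auto simp: abs_if)
  show ?thesis unfolding E by (rule I)
qed

definition dd :: "nat \<Rightarrow> real \<Rightarrow> real" where "dd k x = it (Suc k) x - it k x"

lemma dd_bound: "x \<in> {0..1} \<Longrightarrow> \<bar>dd k x\<bar> \<le> 3/2 * (7/8)^k * (if x \<le> 1/2 then 1/4 else 1)"
proof (induction k arbitrary: x)
  case 0
  have "0 \<le> it 1 x \<and> it 1 x \<le> 3/8" "0 \<le> it 0 x \<and> it 0 x \<le> 3/8"
    using Mn_range it_Good 0 unfolding Good_def by auto
  then have "\<bar>it (Suc 0) x - it 0 x\<bar> \<le> 3/8" unfolding abs_le_iff by simp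
  then show ?case by (cases "x \<le> 1/2") (auto simp: dd_def)
next
  case (Suc k)
  have IH: "\<And>y. y \<in> {0..1} \<Longrightarrow> \<bar>it (Suc k) y - it k y\<bar> \<le> 3/2 * (7/8)^k * (if y \<le> 1/2 then 1/4 else 1)"
    using Suc.IH unfolding dd_def by blast
  have IH1: "\<And>y. y \<in> {0..1} \<Longrightarrow> \<bar>it (Suc k) y - it k y\<bar> \<le> 3/2 * (7/8)^k"
  proof -
    fix y :: real assume y: "y \<in> {0..1}"
    have "(0::real) \<le> 3/2 * (7/8)^k" by simp
    then have "3/2 * (7/8)^k * (if y \<le> 1/2 then 1/4 else 1) \<le> (3/2 * (7/8)^k :: real)"
      by (auto intro: mult_left_le)
    then show "\<bar>it (Suc k) y - it k y\<bar> \<le> 3/2 * (7/8)^k" using IH[OF y] by linarith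
  qed
  have e: "dd (Suc k) x = Top (it (Suc k)) x - Top (it k) x" by (simp add: dd_def it_Suc)
  have pk: "(0::real) \<le> (7/8)^k" by simp
  show ?case
  proof (cases "x = 0")
    case True then show ?thesis using e by (simp add: Top_zero)
  next
    case False
    then have x0: "0 < x" using Suc.prems by simp
    show ?thesis
    proof (cases "x \<le> 1/2")
      case True
      have "\<bar>dd (Suc k) x\<bar> \<le> 1/8 * \<bar>it (Suc k) (frac (1/x)) - it k (frac (1/x))\<bar>"
        unfolding e by (rule Top_diff_small[OF x0 True])
      also have "\<dots> \<le> 1/8 * (3/2 * (7/8)^k)" using IH1 frac_in by (intro mult_left_mono) auto
      also have "\<dots> \<le> 3/2 * (7/8)^(Suc k) * (1/4)" using pk by simp
      finally show ?thesis using True by simp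
    next
      case False
      have x1: "x \<le> 1" using Suc.prems by simp
      have a: "1/x - 1 \<in> {0..1}" using x0 x1 False by (auto simp: field_simps)
      have b: "1 - x \<in> {0..1}" "1 - x \<le> 1/2" using x1 False by auto
      have "\<bar>dd (Suc k) x\<bar> \<le> 3/4 * \<bar>it (Suc k) (1/x - 1) - it k (1/x - 1)\<bar> + 1/2 * \<bar>it (Suc k) (1 - x) - it k (1 - x)\<bar>"
        unfolding e using False x1 by (intro Top_diff_big) auto
      also have "\<dots> \<le> 3/4 * (3/2 * (7/8)^k) + 1/2 * (3/2 * (7/8)^k * (1/4))"
        using IH1[OF a] IH[OF b(1)] b(2) by (intro add_mono mult_left_mono) auto
      also have "\<dots> = 3/2 * (7/8)^(Suc k)" by simp
      finally show ?thesis using False by simp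
    qed
  qed
qed

lemma dd_bound1: "x \<in> {0..1} \<Longrightarrow> norm (dd k x) \<le> 3/2 * (7/8)^k"
  by (cases "x \<le> 1/2") (use dd_bound[of x k] in auto)

definition FF :: "real \<Rightarrow> real" where "FF x = g0 x + (\<Sum>i. dd i x)"

lemma it_sum: "it n = (\<lambda>x. g0 x + (\<Sum>i<n. dd i x))"
proof
  fix x
  have "(\<Sum>i<n. dd i x) = it n x - it 0 x"
    unfolding dd_def by (rule sum_lessThan_telescope)
  then show "it n x = g0 x + (\<Sum>i<n. dd i x)" by (simp add: it_def)
qed

lemma FF_unif: "uniform_limit {0..1} it FF sequentially"
proof -
  have s: "summable (\<lambda>k. 3/2 * (7/8::real)^k)" by (intro summable_mult summable_geometric) simp
  have w: "uniform_limit {0..1} (\<lambda>n x. \<Sum>i<n. dd i x) (\<lambda>x. suminf (\<lambda>i. dd i x)) sequentially"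
    by (rule Weierstrass_m_test[OF dd_bound1 s])
  have "uniform_limit {0..1} (\<lambda>n x. g0 x + (\<Sum>i<n. dd i x)) (\<lambda>x. g0 x + suminf (\<lambda>i. dd i x)) sequentially"
    using uniform_limit_add[OF uniform_limit_const[where c=g0] w] by simp
  then show ?thesis unfolding it_sum[symmetric] FF_def[abs_def] by simp
qed

lemma FF_lim: "x \<in> {0..1} \<Longrightarrow> (\<lambda>n. it n x) \<longlonglongrightarrow> FF x"
  using tendsto_uniform_limitI[OF FF_unif] by blast

lemma FF_cont: "continuous_on {0..1} FF"
  by (rule uniform_limit_theorem[OF _ FF_unif]) (auto simp: it_Good[unfolded Good_def])

lemma FF_Bd: "Bd FF"
proof -
  have h: "\<And>k. it k 0 = 0" "\<And>k. it k (1/2) = 1/16" "\<And>k. it k 1 = 3/8"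
    using it_Good unfolding Good_def Bd_def by blast+
  have "(\<lambda>n. it n 0) \<longlonglongrightarrow> 0" by (simp add: h)
  then have a: "FF 0 = 0" using FF_lim[of 0] LIMSEQ_unique by auto
  have "(\<lambda>n. it n (1/2)) \<longlonglongrightarrow> 1/16" by (simp only: h) simp
  moreover have "(\<lambda>n. it n (1/2)) \<longlonglongrightarrow> FF (1/2)" by (rule FF_lim) simp
  ultimately have b: "FF (1/2) = 1/16" using LIMSEQ_unique by metis
  have "(\<lambda>n. it n 1) \<longlonglongrightarrow> 3/8" by (simp only: h) simp
  moreover have "(\<lambda>n. it n 1) \<longlonglongrightarrow> FF 1" by (rule FF_lim) simp
  ultimately have c: "FF 1 = 3/8" using LIMSEQ_unique by metis
  show ?thesis unfolding Bd_def using a b c by blast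
qed

lemma FF_Mn: "Mn FF"
  unfolding Mn_def
proof (intro allI impI)
  fix x y :: real assume xy: "0 \<le> x" "x \<le> y" "y \<le> 1"
  have "\<And>n. it n x \<le> it n y" using it_Good xy unfolding Good_def Mn_def by blast
  then show "FF x \<le> FF y" using FF_lim[of x] FF_lim[of y] xy by (intro LIMSEQ_le) auto
qed

lemma Top_lim:
  assumes G: "\<And>y. y \<in> {0..1} \<Longrightarrow> (\<lambda>n. G n y) \<longlonglongrightarrow> L y" and x: "x \<in> {0..1}"
  shows "(\<lambda>n. Top (G n) x) \<longlonglongrightarrow> Top L x"
proof (cases "x \<le> 0 \<or> x > 1")
  case True then show ?thesis by (simp add: Top_def)
next
  case F1: False
  then have x0: "0 < x" "x \<le> 1" by auto
  show ?thesis
  proof (cases "x \<le> 1/2")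
    case True
    have "(\<lambda>n. G n (frac (1/x))) \<longlonglongrightarrow> L (frac (1/x))" using G frac_in by auto
    then have "(\<lambda>n. 4 powr (- real_of_int \<lfloor>1 / x\<rfloor>) * (1 - 2 * G n (frac (1 / x))))
        \<longlonglongrightarrow> 4 powr (- real_of_int \<lfloor>1 / x\<rfloor>) * (1 - 2 * L (frac (1 / x)))"
      by (intro tendsto_intros)
    then show ?thesis using F1 True by (simp add: Top_def)
  next
    case False
    have a: "1/x - 1 \<in> {0..1}" "1 - x \<in> {0..1}" using x0 False by (auto simp: field_simps)
    have "(\<lambda>n. 3/8 - 3/4 * G n (1 / x - 1) - 1/2 * G n (1 - x))
        \<longlonglongrightarrow> 3/8 - 3/4 * L (1 / x - 1) - 1/2 * L (1 - x)"
      using G[OF a(1)] G[OF a(2)] by (intro tendsto_intros)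
    then show ?thesis using F1 False by (simp add: Top_def)
  qed
qed

lemma FF_fix: "x \<in> {0..1} \<Longrightarrow> Top FF x = FF x"
proof -
  assume x: "x \<in> {0..1}"
  have "(\<lambda>n. Top (it n) x) \<longlonglongrightarrow> Top FF x" by (rule Top_lim[OF FF_lim x])
  moreover have "(\<lambda>n. it (Suc n) x) \<longlonglongrightarrow> FF x" using FF_lim[OF x] by (rule LIMSEQ_Suc)
  ultimately show ?thesis unfolding it_Suc using LIMSEQ_unique by blast
qed

lemma FF_Bd': "FF 0 = 0" "FF (1/2) = 1/16" "FF 1 = 3/8"
  using FF_Bd unfolding Bd_def by auto

lemma FF_mono: "0 \<le> x \<Longrightarrow> x \<le> y \<Longrightarrow> y \<le> 1 \<Longrightarrow> FF x \<le> FF y"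
  using FF_Mn unfolding Mn_def by blast

lemma FF_range: "0 \<le> x \<Longrightarrow> x \<le> 1 \<Longrightarrow> 0 \<le> FF x \<and> FF x \<le> 3/8"
  using Mn_range[OF FF_Mn FF_Bd] by blast

lemma FF_piece:
  fixes n :: nat
  assumes n: "n \<ge> 2" and x: "1/(real n+1) \<le> x" "x \<le> 1/real n"
  shows "FF x = 4 powr (- real n) * (1 - 2 * FF (1/x - real n))"
proof -
  have "x \<in> {0..1}" using inv_piece_range[of n x] n x
    by (auto intro: order_trans[OF x(2)] simp: divide_le_eq_1)
  then show ?thesis using Top_piece[OF FF_Bd'(1) FF_Bd'(3) n x] FF_fix by simp
qed

lemma FF_right:
  assumes x: "1/2 \<le> x" "x \<le> 1"
  shows "FF x = 3/8 - 3/4 * FF (1/x - 1) - 1/2 * FF (1 - x)"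
  using Top_right[OF FF_Bd x] FF_fix[of x] x by simp

lemma FF_pos: assumes "0 < t" "t \<le> 1" shows "0 < FF t"
proof (cases "t \<le> 1/2")
  case True
  have P: "0 < (4::real) powr (- real_of_int (\<lfloor>1/t\<rfloor> + 1))" by simp
  have "Top FF t = FF t" by (rule FF_fix) (use assms in auto)
  then show ?thesis using Top_lo_hi[OF FF_Bd FF_Mn assms(1) True] P by linarith
next
  case False
  then show ?thesis using FF_mono[of "1/2" t] FF_Bd' assms by simp
qed

lemma FF_below: assumes "0 \<le> t" "t < 1" shows "FF t < 3/8"
proof (cases "t \<le> 1/2")
  case True
  then show ?thesis using Top_small[OF FF_Bd FF_Mn assms(1) True] FF_fix[of t] assms by simp
next
  case False
  have a: "0 \<le> 1/t - 1" "1/t - 1 \<le> 1" using False assms by (auto simp: field_simps)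
  have "0 < FF (1 - t)" using FF_pos[of "1 - t"] assms by simp
  moreover have "0 \<le> FF (1/t - 1)" using FF_range a by blast
  ultimately show ?thesis using FF_right[of t] False assms by simp
qed

definition Cst :: "real \<Rightarrow> real \<Rightarrow> bool" where
  "Cst a b \<longleftrightarrow> 0 \<le> a \<and> a < b \<and> b \<le> 1 \<and> FF a = FF b"

lemma Cst_mid: "Cst a b \<Longrightarrow> a \<le> c \<Longrightarrow> c \<le> b \<Longrightarrow> FF c = FF a"
  unfolding Cst_def using FF_mono[of a c] FF_mono[of c b] by force

lemma L1:
  assumes C: "Cst a b" and b: "b \<le> 1/2"
  shows "\<exists>a' b'. Cst a' b' \<and> 4 * (b - a) \<le> b' - a'"
proof -
  have ab: "0 \<le> a" "a < b" "FF a = FF b" using C unfolding Cst_def by auto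
  have b0: "0 < b" using ab by simp
  define n where "n = nat \<lfloor>1/b\<rfloor>"
  have f2: "\<lfloor>1/b\<rfloor> \<ge> 2" by (rule floor_ge2[OF b0 b])
  have n2: "n \<ge> 2" using f2 n_def by linarith
  have nr: "real n = real_of_int \<lfloor>1/b\<rfloor>" unfolding n_def by (rule of_nat_nat) (use f2 in linarith)
  have "real n \<le> 1/b" using nr by linarith
  then have bu: "b \<le> 1/real n" using b0 n2 by (simp add: field_simps)
  have "1/b < real n + 1" using nr by linarith
  then have bl: "1/(real n+1) < b" using b0 by (simp add: field_simps)
  have p0: "(0::real) < 4 powr (- real n)" by simp
  show ?thesis
  proof (cases "1/(real n+1) \<le> a")
    case True
    have a0: "0 < a" using True by (smt (verit) divide_pos_pos of_nat_0_le_iff)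
    have au: "a \<le> 1/real n" using ab bu by simp
    have ra: "0 \<le> 1/a - real n \<and> 1/a - real n \<le> 1" using inv_piece_range[OF _ True au] n2 by simp
    have rb: "0 \<le> 1/b - real n \<and> 1/b - real n \<le> 1" using inv_piece_range[OF _ _ bu] bl n2 by simp
    have "4 powr (- real n) * (1 - 2 * FF (1/a - real n)) = 4 powr (- real n) * (1 - 2 * FF (1/b - real n))"
      using FF_piece[OF n2 True au] FF_piece[OF n2 _ bu] bl ab by simp
    then have eq: "FF (1/b - real n) = FF (1/a - real n)" using p0 by simp
    have lt: "1/b < 1/a" using a0 ab by (simp add: frac_less2)
    have ab4: "a * b \<le> 1/4" using ab b mult_mono[of a "1/2" b "1/2"] by simp
    have e: "1/a - 1/b = (b - a) / (a * b)" using a0 b0 by (simp add: field_simps)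
    have "(b - a) / (1/4) \<le> (b - a) / (a * b)"
      using ab4 a0 b0 ab by (intro divide_left_mono) auto
    then have "4 * (b - a) \<le> (1/a - real n) - (1/b - real n)" using e by simp
    moreover have "Cst (1/b - real n) (1/a - real n)" unfolding Cst_def using ra rb eq lt by simp
    ultimately show ?thesis by blast
  next
    case False
    define c where "c = 1/(real n+1)"
    have cab: "a \<le> c" "c \<le> b" using False bl c_def by auto
    have "FF c = FF b" using Cst_mid[OF C cab] ab by simp
    moreover have "FF c = 4 powr (- real n) * (1 - 2 * FF 1)"
      using FF_piece[OF n2, of c] n2 unfolding c_def
      by (simp add: frac_le)
    moreover have "FF b = 4 powr (- real n) * (1 - 2 * FF (1/b - real n))"
      using FF_piece[OF n2 _ bu] bl by simp
    ultimately have "FF (1/b - real n) = FF 1" using p0 by simp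
    moreover have "FF (1/b - real n) < 3/8"
    proof (rule FF_below)
      show "0 \<le> 1/b - real n" using inv_piece_range[OF _ _ bu] bl n2 by simp
      show "1/b - real n < 1" using \<open>1/b < real n + 1\<close> by simp
    qed
    ultimately show ?thesis using FF_Bd' by simp
  qed
qed

lemma L2:
  assumes C: "Cst a b" and a: "1/2 \<le> a"
  shows "Cst (1 - b) (1 - a)"
proof -
  have ab: "0 \<le> a" "a < b" "b \<le> 1" "FF a = FF b" using C unfolding Cst_def by auto
  have a0: "0 < a" using a by simp
  have r: "0 \<le> 1/b - 1" "1/b - 1 \<le> 1/a - 1" "1/a - 1 \<le> 1"
    using a0 ab a by (auto simp: field_simps)
  have m1: "FF (1/b - 1) \<le> FF (1/a - 1)" using FF_mono r by blast
  have m2: "FF (1 - b) \<le> FF (1 - a)" using FF_mono ab by simp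
  have "3/8 - 3/4 * FF (1/a - 1) - 1/2 * FF (1 - a) = 3/8 - 3/4 * FF (1/b - 1) - 1/2 * FF (1 - b)"
    using FF_right[of a] FF_right[of b] ab a by simp
  then have "FF (1 - b) = FF (1 - a)" using m1 m2 by linarith
  then show ?thesis unfolding Cst_def using ab by simp
qed

lemma Lstep:
  assumes C: "Cst a b"
  shows "\<exists>a' b'. Cst a' b' \<and> 2 * (b - a) \<le> b' - a'"
proof -
  have ab: "0 \<le> a" "a < b" "b \<le> 1" "FF a = FF b" using C unfolding Cst_def by auto
  show ?thesis
  proof (cases "b \<le> 1/2")
    case True
    then obtain a' b' where "Cst a' b'" "4 * (b - a) \<le> b' - a'" using L1[OF C] by blast
    then show ?thesis using ab by (intro exI[of _ a'] exI[of _ b']) auto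
  next
    case bh: False
    show ?thesis
    proof (cases "1/2 \<le> a")
      case True
      have C2: "Cst (1 - b) (1 - a)" by (rule L2[OF C True])
      then obtain a' b' where "Cst a' b'" "4 * ((1 - a) - (1 - b)) \<le> b' - a'" using L1[OF C2] True by auto
      then show ?thesis using ab by (intro exI[of _ a'] exI[of _ b']) auto
    next
      case False
      have m: "FF (1/2) = FF a" using Cst_mid[OF C, of "1/2"] False bh by simp
      show ?thesis
      proof (cases "b - 1/2 \<le> 1/2 - a")
        case True
        have C2: "Cst a (1/2)" unfolding Cst_def using m ab False by simp
        obtain a' b' where "Cst a' b'" "4 * (1/2 - a) \<le> b' - a'" using L1[OF C2] by auto
        then show ?thesis using True by (intro exI[of _ a'] exI[of _ b']) auto
      next
        case F2: False
        have C2: "Cst (1/2) b" unfolding Cst_def using m ab bh by simp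
        have C3: "Cst (1 - b) (1/2)" using L2[OF C2] by simp
        obtain a' b' where "Cst a' b'" "4 * (1/2 - (1 - b)) \<le> b' - a'" using L1[OF C3] by auto
        then show ?thesis using F2 by (intro exI[of _ a'] exI[of _ b']) auto
      qed
    qed
  qed
qed

lemma Liter: "Cst a b \<Longrightarrow> \<exists>a' b'. Cst a' b' \<and> 2^k * (b - a) \<le> b' - a'"
proof (induction k)
  case 0 then show ?case by auto
next
  case (Suc k)
  then obtain a' b' where C: "Cst a' b'" "2^k * (b - a) \<le> b' - a'" by blast
  obtain a'' b'' where "Cst a'' b''" "2 * (b' - a') \<le> b'' - a''" using Lstep[OF C(1)] by blast
  then show ?case using C(2) by (intro exI[of _ a''] exI[of _ b'']) auto
qed

lemma no_Cst: "\<not> Cst a b"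
proof
  assume C: "Cst a b"
  then have d: "0 < b - a" unfolding Cst_def by simp
  obtain k :: nat where k: "1/(b - a) < 2^k" using real_arch_pow[of 2 "1/(b-a)"] by auto
  obtain a' b' where C2: "Cst a' b'" "2^k * (b - a) \<le> b' - a'" using Liter[OF C] by blast
  have "b' - a' \<le> 1" using C2(1) unfolding Cst_def by simp
  moreover have "1 < 2^k * (b - a)" using k d by (simp add: field_simps)
  ultimately show False using C2(2) by simp
qed

lemma FF_strict: "strict_mono_on {0..1} FF"
  unfolding strict_mono_on_def
proof (intro allI impI)
  fix x y :: real assume "x \<in> {0..1} \<and> y \<in> {0..1} \<and> x < y"
  then have xy: "x \<in> {0..1}" "y \<in> {0..1}" "x < y" by auto
  have "FF x \<le> FF y" using FF_mono xy by simp
  moreover have "FF x \<noteq> FF y" using no_Cst[of x y] xy unfolding Cst_def by auto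
  ultimately show "FF x < FF y" by simp
qed

lemma of_rat_frac: "(of_rat (frac r) :: real) = frac (of_rat r)"
  by (simp add: frac_def of_rat_diff)

lemma rat_le_iff: "((of_rat q :: real) \<le> 1/2) \<longleftrightarrow> q \<le> 1/2"
proof -
  have "(of_rat q :: real) \<le> of_rat (1/2) \<longleftrightarrow> q \<le> 1/2" by (rule of_rat_less_eq)
  then show ?thesis by (simp add: of_rat_divide)
qed

lemma FF_rat: "0 \<le> q \<Longrightarrow> q \<le> 1 \<Longrightarrow> FF (of_rat q) = interrobang_rat q"
proof (induction q rule: interrobang_rat.induct)
  case (1 x)
  show ?case
  proof (cases "x = 0")
    case True
    then show ?thesis by (simp add: FF_Bd'(1) interrobang_rat.simps[of 0])
  next
    case False
    then have x0: "0 < x" using 1 by simp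
    have xr: "0 < (of_rat x :: real)" "(of_rat x :: real) \<le> 1" using x0 1 by auto
    show ?thesis
    proof (cases "x \<le> 1/2")
      case True
      have IH: "FF (of_rat (frac (1/x))) = interrobang_rat (frac (1/x))"
        using 1(1)[of] x0 True frac_lt_1[of "1/x"] by (simp add: frac_ge_0 less_imp_le)
      have I: "interrobang_rat x = 4 powr (- real_of_int \<lfloor>1 / x\<rfloor>) * (1 - 2 * interrobang_rat (frac (1 / x)))"
        using x0 True 1 by (subst interrobang_rat.simps) simp
      have t: "(of_rat x :: real) \<le> 1/2" using True rat_le_iff by blast
      have fl: "\<lfloor>1 / (of_rat x :: real)\<rfloor> = \<lfloor>1/x\<rfloor>"
        by (metis of_rat_floor of_rat_1 of_rat_divide)
      have fr: "frac (1 / (of_rat x :: real)) = of_rat (frac (1/x))"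
        by (simp add: of_rat_frac of_rat_divide)
      have "FF (of_rat x) = Top FF (of_rat x)" using FF_fix xr by simp
      also have "\<dots> = 4 powr (- real_of_int \<lfloor>1/x\<rfloor>) * (1 - 2 * FF (of_rat (frac (1/x))))"
        using xr t by (simp add: Top_def fl fr)
      finally show ?thesis using IH I by simp
    next
      case False
      have IH2: "FF (of_rat (1/x - 1)) = interrobang_rat (1/x - 1)"
        using 1(2) x0 False 1 by (simp add: field_simps)
      have IH3: "FF (of_rat (1 - x)) = interrobang_rat (1 - x)"
        using 1(3) x0 False 1 by simp
      have I: "interrobang_rat x = 3/8 - 3/4 * interrobang_rat (1 / x - 1) - 1/2 * interrobang_rat (1 - x)"
        using x0 False 1 by (subst interrobang_rat.simps) simp
      have t: "\<not> (of_rat x :: real) \<le> 1/2" using False rat_le_iff by blast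
      have "FF (of_rat x) = Top FF (of_rat x)" using FF_fix xr by simp
      also have "\<dots> = 3/8 - 3/4 * FF (of_rat (1/x - 1)) - 1/2 * FF (of_rat (1 - x))"
        using xr t by (simp add: Top_def of_rat_divide of_rat_diff)
      finally show ?thesis using IH2 IH3 I by simp
    qed
  qed
qed

lemma uniq:
  assumes g: "continuous_on {0..1} g" and q: "\<forall>q :: rat. 0 \<le> q \<and> q \<le> 1 \<longrightarrow> g (of_rat q) = interrobang_rat q"
    and x: "x \<in> {0..1}"
  shows "g x = FF x"
proof (rule ccontr)
  assume ne: "g x \<noteq> FF x"
  define h where "h y = g y - FF y" for y
  have hc: "continuous_on {0..1} h" unfolding h_def using g FF_cont by (intro continuous_intros)
  have e: "\<bar>h x\<bar> > 0" using ne h_def by simp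
  obtain d where d: "d > 0" "\<forall>y\<in>{0..1}. dist y x < d \<longrightarrow> dist (h y) (h x) < \<bar>h x\<bar>"
    using hc x e unfolding continuous_on_iff by blast
  define lo where "lo = max 0 (x - d)"
  define hi where "hi = min 1 (x + d)"
  have "lo < hi" using x d unfolding lo_def hi_def by auto
  then obtain r where r: "r \<in> \<rat>" "lo < r" "r < hi" using Rats_dense_in_real by blast
  then obtain p where p: "r = of_rat p" by (auto elim: Rats_cases)
  have ry: "r \<in> {0..1}" "dist r x < d" using r unfolding lo_def hi_def dist_real_def by auto
  have "0 \<le> p" "p \<le> 1" using ry(1) p by auto
  then have "g r = FF r" using q FF_rat p by simp
  then have "h r = 0" by (simp add: h_def)
  then show False using d(2) ry by (auto simp: dist_real_def)
qed

theorem mainTheorem13: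
  shows "\<exists>f :: real \<Rightarrow> real.
    continuous_on {0..1} f \<and> strict_mono_on {0..1} f \<and>
    (\<forall>q :: rat. 0 \<le> q \<and> q \<le> 1 \<longrightarrow> f (of_rat q) = interrobang_rat q) \<and>
    (\<forall>g :: real \<Rightarrow> real. continuous_on {0..1} g \<and> strict_mono_on {0..1} g \<and>
        (\<forall>q :: rat. 0 \<le> q \<and> q \<le> 1 \<longrightarrow> g (of_rat q) = interrobang_rat q)
        \<longrightarrow> (\<forall>x \<in> {0..1}. g x = f x)) \<and>
    f 0 = 0 \<and>
    (\<forall>x :: real. 0 < x \<and> x \<le> 1/2 \<longrightarrow>
        f x = 4 powr (- real_of_int \<lfloor>1 / x\<rfloor>) * (1 - 2 * f (frac (1 / x)))) \<and>
    (\<forall>x :: real. 1/2 < x \<and> x \<le> 1 \<longrightarrow>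
        f x = 3/8 - 3/4 * f (1 / x - 1) - 1/2 * f (1 - x))"
proof (intro exI[of _ FF] conjI allI impI ballI)
  show "continuous_on {0..1} FF" by (rule FF_cont)
  show "strict_mono_on {0..1} FF" by (rule FF_strict)
  show "FF 0 = 0" by (rule FF_Bd'(1))
next
  fix q :: rat assume "0 \<le> q \<and> q \<le> 1"
  then show "FF (of_rat q) = interrobang_rat q" using FF_rat by simp
next
  fix g :: "real \<Rightarrow> real" and x :: real
  assume "continuous_on {0..1} g \<and> strict_mono_on {0..1} g \<and>
        (\<forall>q :: rat. 0 \<le> q \<and> q \<le> 1 \<longrightarrow> g (of_rat q) = interrobang_rat q)" "x \<in> {0..1}"
  then show "g x = FF x" using uniq by blast
next
  fix x :: real assume x: "0 < x \<and> x \<le> 1/2"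
  then have "FF x = Top FF x" using FF_fix by simp
  then show "FF x = 4 powr (- real_of_int \<lfloor>1 / x\<rfloor>) * (1 - 2 * FF (frac (1 / x)))"
    using x by (simp add: Top_def)
next
  fix x :: real assume x: "1/2 < x \<and> x \<le> 1"
  then have "FF x = Top FF x" using FF_fix by simp
  then show "FF x = 3/8 - 3/4 * FF (1 / x - 1) - 1/2 * FF (1 - x)"
    using x by (simp add: Top_def)
qed

end
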